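(* Let $\nu,\mu\in\mathbb{N}$, let $h>0$ and $r\in\mathbb{N}$ with $r\geq 1$. Let $\mathbf{F}_x\in\mathbb{R}^{\nu\times\nu}$, $\mathbf{F}_y\in\mathbb{R}^{\nu\times\mu}$, $\mathbf{G}_x\in\mathbb{R}^{\mu\times\nu}$, $\mathbf{G}_y\in\mathbb{R}^{\mu\times\mu}$ be the Jacobian matrices $\partial\mathbf f/\partial\mathbf x$, $\partial\mathbf f/\partial\mathbf y$, $\partial\mathbf g/\partial\mathbf x$, $\partial\mathbf g/\partial\mathbf y$ evaluated at an equilibrium $(\mathbf x_o,\mathbf y_o)$ of the system $\mathbf x'=\mathbf f(\mathbf x,\mathbf y)$, $\mathbf 0=\mathbf g(\mathbf x,\mathbf y)$. Suppose vectors $\tilde{\mathbf x}_n,\tilde{\mathbf x}_{n+1},\tilde{\boldsymbol\xi}^{(0)}_{n+1},\dots,\tilde{\boldsymbol\xi}^{(r)}_{n+1}\in\mathbb{R}^{\nu}$ and $\tilde{\mathbf y}_n,\tilde{\mathbf y}_{n+1},\tilde{\mathbf y}_{\rm int}\in\mathbb{R}^{\mu}$ satisfy the linearized Heun predictor-corrector equations $$\tilde{\boldsymbol\xi}^{(0)}_{n+1}=\tilde{\mathbf x}_n+h(\mathbf F_x\tilde{\mathbf x}_n+\mathbf F_y\tilde{\mathbf y}_n),$$ $$\tilde{\boldsymbol\xi}^{(i)}_{n+1}=\tilde{\mathbf x}_n+\tfrac{h}{2}\big[\mathbf F_x\tilde{\mathbf x}_n+\mathbf F_x\tilde{\boldsymbol\xi}^{(i-1)}_{n+1}+\mathbf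 F_y(\tilde{\mathbf y}_n+\tilde{\mathbf y}_{\rm int})\big],\quad i=1,\dots,r,$$ $$\tilde{\mathbf x}_{n+1}=\tilde{\boldsymbol\xi}^{(r)}_{n+1},\qquad \mathbf 0=\mathbf G_x\tilde{\mathbf x}_{n+1}+\mathbf G_y\tilde{\mathbf y}_{n+1}.$$ For $m\in\mathbb{N}$ define $\mathbf C_m=\sum_{j=0}^{m}\big(\tfrac{h}{2}\mathbf F_x\big)^j$ (so $\mathbf C_0=\mathbf I$). Then $$\begin{bmatrix}\mathbf I&\mathbf 0\\ \mathbf G_x&\mathbf G_y\end{bmatrix}\begin{bmatrix}\tilde{\mathbf x}_{n+1}\\ \tilde{\mathbf y}_{n+1}\end{bmatrix}=\begin{bmatrix}\mathbf I+h\mathbf C_r\mathbf F_x & \big(h\mathbf C_r-\tfrac{h}{2}\mathbf C_{r-1}\big)\mathbf F_y\\ \mathbf 0&\mathbf 0\end{bmatrix}\begin{bmatrix}\tilde{\mathbf x}_n\\ \tilde{\mathbf y}_n\end{bmatrix}+\begin{bmatrix}\tfrac{h}{2}\mathbf C_{r-1}\mathbf F_y\tilde{\mathbf y}_{\rm int}\\ \mathbf 0\end{bmatrix}.$$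
   Context: Setting: a power system model is a differential-algebraic system $\mathbf x'(t)=\mathbf f(\mathbf x(t),\mathbf y(t))$, $\mathbf 0=\mathbf g(\mathbf x(t),\mathbf y(t))$ with states $\mathbf x\in\mathbb{R}^\nu$, algebraic variables $\mathbf y\in\mathbb{R}^\mu$, and $\mathbf f,\mathbf g$ differentiable; $(\mathbf x_o,\mathbf y_o)$ is an equilibrium ($\mathbf f(\mathbf x_o,\mathbf y_o)=\mathbf 0$, $\mathbf g(\mathbf x_o,\mathbf y_o)=\mathbf 0$). Heun's method in the partitioned-solution approach with time step $h$ and $r$ corrector steps computes $\boldsymbol\xi^{(0)}_{n+1}=\mathbf x_n+h\mathbf f(\mathbf x_n,\mathbf y_n)$, $\boldsymbol\xi^{(i)}_{n+1}=\mathbf x_n+0.5h\,\mathbf f(\mathbf x_n,\mathbf y_n)+0.5h\,\mathbf f(\boldsymbol\xi^{(i-1)}_{n+1},\mathbf y_{\rm int})$, $\mathbf x_{n+1}=\boldsymbol\xi^{(r)}_{n+1}$, $\mathbf 0=h\,\mathbf g(\mathbf x_{n+1},\mathbf y_{n+1})$, where $\mathbf y_{\rm int}$ is a known value substituted for the not-yet-computed $\mathbf y_{n+1}$ (the "interface" value). Tildes denote deviations from the equilibrium ($\tilde{\mathbf x}_n=\mathbf x_n-\mathbf x_o$, etc.); the displayed equations in the claim are the linearization of this scheme at $(\mathbf x_o,\mathbf y_o)$. $\mathbf I$ is the identity and $\mathbf 0$ the zero matrix of appropriate dimensions. *)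

theory Defs
  imports "HOL-Analysis.Analysis"
begin

text \<open>Matrix power with respect to the matrix product (the ring operations on
  real^'n^'n are componentwise, so we define it explicitly).\<close>
fun matpow :: "real^'n^'n \<Rightarrow> nat \<Rightarrow> real^'n^'n" where
  "matpow A 0 = mat 1"
| "matpow A (Suc k) = A ** matpow A k"

definition Cmat :: "real \<Rightarrow> real^'n^'n \<Rightarrow> nat \<Rightarrow> real^'n^'n" where
  "Cmat h Fx m = (\<Sum>j = 0..m. matpow ((h/2) *\<^sub>R Fx) j)"

definition block_mat ::
  "real^'n^'n \<Rightarrow> real^'m^'n \<Rightarrow> real^'n^'m \<Rightarrow> real^'m^'m \<Rightarrow> real^('n + 'm)^('n + 'm)" where
  "block_mat A B C D = (\<chi> i j. (case i of
       Inl a \<Rightarrow> (case j of Inl b \<Rightarrow> A $ a $ b | Inr b \<Rightarrow> B $ a $ b)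
     | Inr a \<Rightarrow> (case j of Inl b \<Rightarrow> C $ a $ b | Inr b \<Rightarrow> D $ a $ b)))"

definition block_vec :: "real^'n \<Rightarrow> real^'m \<Rightarrow> real^('n + 'm)" where
  "block_vec x y = (\<chi> i. (case i of Inl a \<Rightarrow> x $ a | Inr b \<Rightarrow> y $ b))"

end

theory Submission
  imports Defs
begin

lemma mm_sum: "(A::real^'n^'n) ** sum f {0..m} = sum (\<lambda>j. A ** f j) {0..(m::nat)}"
  by (induction m) (simp_all add: matrix_add_ldistrib)

lemma Cmat_Suc: "Cmat h Fx (Suc k) = mat 1 + ((h/2) *\<^sub>R Fx) ** Cmat h Fx k"
  unfolding Cmat_def mm_sum
  by (subst sum.atLeast0_atMost_Suc_shift) simp

lemma Cmat_0: "Cmat h Fx 0 = mat 1" by (simp add: Cmat_def)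

lemma Cmat_Suc_v: "Cmat h Fx (Suc k) *v w = w + (h/2) *\<^sub>R (Fx *v (Cmat h Fx k *v w))"
  by (simp add: Cmat_Suc matrix_vector_mult_add_rdistrib matrix_vector_mul_assoc[symmetric]
      scaleR_matrix_vector_assoc[symmetric] matrix_vector_mult_scaleR)

lemma bm_Inl: "(block_mat A B C D *v block_vec x y) $ Inl a = (A *v x + B *v y) $ a"
  by (simp add: block_mat_def block_vec_def matrix_vector_mult_def sum.Plus[symmetric] UNIV_Plus_UNIV[symmetric] del: UNIV_Plus_UNIV)
    (subst sum.Plus; simp add: comp_def)

lemma bm_Inr: "(block_mat A B C D *v block_vec x y) $ Inr a = (C *v x + D *v y) $ a"
  by (simp add: block_mat_def block_vec_def matrix_vector_mult_def sum.Plus[symmetric] UNIV_Plus_UNIV[symmetric] del: UNIV_Plus_UNIV)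
    (subst sum.Plus; simp add: comp_def)

theorem mainTheorem1:
  fixes Fx :: "real^'nu^'nu" and Fy :: "real^'mu^'nu"
    and Gx :: "real^'nu^'mu" and Gy :: "real^'mu^'mu"
    and h :: real and r :: nat
    and xn xn1 :: "real^'nu" and xi :: "nat \<Rightarrow> real^'nu"
    and yn yn1 yint :: "real^'mu"
  assumes "h > 0" and "r \<ge> 1"
    and "xi 0 = xn + h *\<^sub>R (Fx *v xn + Fy *v yn)"
    and "\<forall>i \<in> {1..r}. xi i = xn + (h/2) *\<^sub>R (Fx *v xn + Fx *v xi (i - 1) + Fy *v (yn + yint))"
    and "xn1 = xi r"
    and "0 = Gx *v xn1 + Gy *v yn1"
  shows "block_mat (mat 1) 0 Gx Gy *v block_vec xn1 yn1 =
         block_mat (mat 1 + h *\<^sub>R (Cmat h Fx r ** Fx))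
                   ((h *\<^sub>R Cmat h Fx r - (h/2) *\<^sub>R Cmat h Fx (r - 1)) ** Fy)
                   0 0 *v block_vec xn yn
         + block_vec ((h/2) *\<^sub>R (Cmat h Fx (r - 1) ** Fy) *v yint) 0"
proof -
  define C where "C = Cmat h Fx"
  define P where "P i = (if i = 0 then (0::real^'nu^'nu) else C (i - 1))" for i
  have key: "i \<le> r \<Longrightarrow> xi i = xn + h *\<^sub>R (C i *v (Fx *v xn)) + h *\<^sub>R (C i *v (Fy *v yn))
      - (h/2) *\<^sub>R (P i *v (Fy *v yn)) + (h/2) *\<^sub>R (P i *v (Fy *v yint))" for i
  proof (induction i)
    case 0
    then show ?case using assms(3) by (simp add: C_def P_def Cmat_0 algebra_simps)
  next
    case (Suc i)
    have IH: "xi i = xn + h *\<^sub>R (C i *v (Fx *v xn)) + h *\<^sub>R (C i *v (Fy *v yn))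
      - (h/2) *\<^sub>R (P i *v (Fy *v yn)) + (h/2) *\<^sub>R (P i *v (Fy *v yint))"
      using Suc by simp
    have rec: "xi (Suc i) = xn + (h/2) *\<^sub>R (Fx *v xn + Fx *v xi i + Fy *v (yn + yint))"
      using assms(4) Suc.prems by auto
    have CP: "C i *v w = w + (h/2) *\<^sub>R (Fx *v (P i *v w))" for w
      by (cases i) (simp_all add: P_def C_def Cmat_0 Cmat_Suc_v)
    have CS: "C (Suc i) *v w = w + (h/2) *\<^sub>R (Fx *v (C i *v w))" for w
      by (simp add: C_def Cmat_Suc_v)
    have PS: "P (Suc i) = C i" by (simp add: P_def)
    have two: "(h/2) *\<^sub>R (v * 2) = h *\<^sub>R v" for v :: "real^'nu"
      by (simp add: vec_eq_iff)
    show ?case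
      unfolding rec IH CS PS
      by (simp add: CP two algebra_simps matrix_vector_right_distrib matrix_vector_mult_diff_distrib
          matrix_vector_mult_scaleR)
  qed
  have x1: "xn1 = xn + h *\<^sub>R (C r *v (Fx *v xn)) + h *\<^sub>R (C r *v (Fy *v yn))
      - (h/2) *\<^sub>R (C (r - 1) *v (Fy *v yn)) + (h/2) *\<^sub>R (C (r - 1) *v (Fy *v yint))"
    using key[of r] assms(2,5) by (simp add: P_def)
  show ?thesis
  proof (subst vec_eq_iff, intro allI)
    fix k :: "'nu + 'mu"
    show "(block_mat (mat 1) 0 Gx Gy *v block_vec xn1 yn1) $ k = (block_mat (mat 1 + h *\<^sub>R (Cmat h Fx r ** Fx))
                   ((h *\<^sub>R Cmat h Fx r - (h/2) *\<^sub>R Cmat h Fx (r - 1)) ** Fy)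
                   0 0 *v block_vec xn yn
         + block_vec ((h/2) *\<^sub>R (Cmat h Fx (r - 1) ** Fy) *v yint) 0) $ k"
    proof (cases k)
      case (Inl a)
      then show ?thesis unfolding vector_add_component Inl bm_Inl
        by (simp add: block_vec_def x1 C_def[symmetric] algebra_simps matrix_vector_mult_add_rdistrib
          matrix_vector_mult_diff_rdistrib matrix_vector_mul_assoc[symmetric]
          scaleR_matrix_vector_assoc[symmetric] matrix_vector_mult_scaleR)
    next
      case (Inr b)
      then show ?thesis unfolding vector_add_component Inr bm_Inr
        using assms(6) by (simp add: block_vec_def vec_eq_iff)
    qed
  qed
qed

end
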